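(* Let $(X_n)_{n\ge0}$ be a stationary $\beta$-mixing sequence of $\mathbb{R}^d$-valued random variables such that $X_1$ is supported on a compact set $\mathbb{M}$. Then for any $\epsilon>0$ and any sequences of positive integers $k_n,r_n$ with $k_nr_n\le n$, $$\mathbb{P}\big(d_H(\mathbb{X}_n,\mathbb{M})>\epsilon\big)\le\frac{k_n^2\beta_{r_n}+k_n\exp\big(-[\tfrac{k_n}{2}]\rho_{r_n}(\epsilon/2)\big)}{k_n\rho_{r_n}(\epsilon/4)}.$$ Suppose moreover that for some $b>1$ and every sufficiently small $\epsilon>0$, $$\lim_{m\to\infty}\rho_m(\epsilon)\frac{e^{m^{b}}}{m^{1+b}}=\infty\quad\text{and}\quad\lim_{m\to\infty}\frac{e^{2m^{b}}}{m^2}\beta_m=0.$$ Then $(X_n)_{n\ge0}$ is asymptotically $(\epsilon,\alpha)$-dense in $\mathbb{M}$.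
   Context: The $\beta$-mixing coefficients are $\beta_n=\sup_{l\ge1}\mathbb{E}\big\{\sup_{B\in\sigma(X_i,i\ge l+n)}|\mathbb{P}(B\mid\sigma(X_1,\ldots,X_l))-\mathbb{P}(B)|\big\}$, and the sequence is $\beta$-mixing if $\beta_n\to0$. $\mathbb{X}_n=\{X_1,\ldots,X_n\}$; $[\cdot]$ is the integer part. For $p\ge1$, $\rho_p(\epsilon)=\inf_{x\in\mathbb{M}_{dp}}\mathbb{P}(\|(X_1,\ldots,X_p)^t-x\|\le\epsilon)$, with $\mathbb{M}_{dp}$ the support (smallest closed set of full mass) of $(X_1,\ldots,X_p)^t$. $d_H$ is the Hausdorff distance. The sequence is asymptotically $(\epsilon,\alpha)$-dense in $\mathbb{M}$ if for every sufficiently small $\epsilon>0$ and every $\alpha\in(0,1)$ there exists $n_0$ such that for all $n\ge n_0$, $\mathbb{P}(d_H(\mathbb{X}_n,\mathbb{M})\le\epsilon)\ge1-\alpha$. (The paper uses the letter $\beta$ for the exponent $b$; renamed here to avoid clash with the mixing coefficients.) *)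

theory Defs
  imports "HOL-Probability.Probability"
begin

definition hausdorff_dist :: "'a::metric_space set \<Rightarrow> 'a set \<Rightarrow> real" where
  "hausdorff_dist A B = max (SUP a\<in>A. infdist a B) (SUP b\<in>B. infdist b A)"

definition gen_sigma :: "'a measure \<Rightarrow> (nat \<Rightarrow> 'a \<Rightarrow> 'b::topological_space) \<Rightarrow> nat set \<Rightarrow> 'a set set" where
  "gen_sigma M X I = sigma_sets (space M) (\<Union>i\<in>I. {X i -` B \<inter> space M | B. B \<in> sets borel})"

definition fin_partition :: "'a measure \<Rightarrow> 'a set set \<Rightarrow> nat \<Rightarrow> (nat \<Rightarrow> 'a set) \<Rightarrow> bool" where
  "fin_partition M F m A \<longleftrightarrow> (\<forall>i<m. A i \<in> F) \<and> disjoint_family_on A {..<m}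
      \<and> (\<Union>i<m. A i) = space M"

text \<open>Absolute regularity (beta) coefficient between two sub-sigma-algebras F and G
  (Volkonskii--Rozanov form).\<close>
definition beta_coeff :: "'a measure \<Rightarrow> 'a set set \<Rightarrow> 'a set set \<Rightarrow> real" where
  "beta_coeff M F G = Sup {(1/2) * (\<Sum>i<m. \<Sum>j<m'.
        \<bar>measure M (A i \<inter> B j) - measure M (A i) * measure M (B j)\<bar>) | m m' A B.
        fin_partition M F m A \<and> fin_partition M G m' B}"

definition beta_mix :: "'a measure \<Rightarrow> (nat \<Rightarrow> 'a \<Rightarrow> 'b::topological_space) \<Rightarrow> nat \<Rightarrow> real" where
  "beta_mix M X n = (SUP l\<in>{1..}. beta_coeff M (gen_sigma M X {1..l}) (gen_sigma M X {l+n..}))"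

definition stationary :: "'a measure \<Rightarrow> (nat \<Rightarrow> 'a \<Rightarrow> 'b::topological_space) \<Rightarrow> bool" where
  "stationary M X \<longleftrightarrow> (\<forall>l k.
     distr M (PiM {..<k} (\<lambda>_. borel)) (\<lambda>\<omega>. restrict (\<lambda>i. X (l + i) \<omega>) {..<k})
   = distr M (PiM {..<k} (\<lambda>_. borel)) (\<lambda>\<omega>. restrict (\<lambda>i. X i \<omega>) {..<k}))"

definition rv_support :: "'a measure \<Rightarrow> ('a \<Rightarrow> 'b::topological_space) \<Rightarrow> 'b set" where
  "rv_support M Y = \<Inter>{C. closed C \<and> (AE \<omega> in M. Y \<omega> \<in> C)}"

text \<open>R^{dp} is represented by functions x :: nat => 'b with x i = 0 for i >= p
  (x i is the i+1-st block of d coordinates), with the Euclidean norm.\<close>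
definition blk_space :: "nat \<Rightarrow> (nat \<Rightarrow> 'b::euclidean_space) set" where
  "blk_space p = {x. \<forall>i\<ge>p. x i = 0}"

definition blk_dist :: "nat \<Rightarrow> (nat \<Rightarrow> 'b::euclidean_space) \<Rightarrow> (nat \<Rightarrow> 'b) \<Rightarrow> real" where
  "blk_dist p x y = sqrt (\<Sum>i<p. (norm (x i - y i))\<^sup>2)"

definition blk_closed :: "nat \<Rightarrow> (nat \<Rightarrow> 'b::euclidean_space) set \<Rightarrow> bool" where
  "blk_closed p C \<longleftrightarrow> C \<subseteq> blk_space p \<and>
     (\<forall>x\<in>blk_space p. (\<forall>\<delta>>0. \<exists>y\<in>C. blk_dist p x y < \<delta>) \<longrightarrow> x \<in> C)"

definition blk_vec :: "(nat \<Rightarrow> 'a \<Rightarrow> 'b::euclidean_space) \<Rightarrow> nat \<Rightarrow> 'a \<Rightarrow> nat \<Rightarrow> 'b" where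
  "blk_vec X p \<omega> = (\<lambda>i. if i < p then X (i + 1) \<omega> else 0)"

definition blk_support :: "'a measure \<Rightarrow> (nat \<Rightarrow> 'a \<Rightarrow> 'b::euclidean_space) \<Rightarrow> nat \<Rightarrow> (nat \<Rightarrow> 'b) set" where
  "blk_support M X p = \<Inter>{C. blk_closed p C \<and> (AE \<omega> in M. blk_vec X p \<omega> \<in> C)} \<inter> blk_space p"

definition rho :: "'a measure \<Rightarrow> (nat \<Rightarrow> 'a \<Rightarrow> 'b::euclidean_space) \<Rightarrow> nat \<Rightarrow> real \<Rightarrow> real" where
  "rho M X p \<epsilon> = (INF x\<in>blk_support M X p.
      measure M {\<omega>\<in>space M. blk_dist p (blk_vec X p \<omega>) x \<le> \<epsilon>})"

definition sample :: "(nat \<Rightarrow> 'a \<Rightarrow> 'b) \<Rightarrow> nat \<Rightarrow> 'a \<Rightarrow> 'b set" where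
  "sample X n \<omega> = (\<lambda>i. X i \<omega>) ` {1..n}"

definition asympt_dense :: "'a measure \<Rightarrow> (nat \<Rightarrow> 'a \<Rightarrow> 'b::metric_space) \<Rightarrow> 'b set \<Rightarrow> bool" where
  "asympt_dense M X S \<longleftrightarrow> (\<exists>\<epsilon>0>0. \<forall>\<epsilon>. 0 < \<epsilon> \<and> \<epsilon> < \<epsilon>0 \<longrightarrow> (\<forall>\<alpha>. 0 < \<alpha> \<and> \<alpha> < 1 \<longrightarrow>
     (\<exists>n0. \<forall>n\<ge>n0. measure M {\<omega>\<in>space M. hausdorff_dist (sample X n \<omega>) S \<le> \<epsilon>} \<ge> 1 - \<alpha>)))"

end

theory Submission
  imports Defs
begin


lemma blk_dist_L2: "blk_dist p x y = L2_set (\<lambda>i. norm (x i - y i)) {..<p}"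
  unfolding blk_dist_def L2_set_def by simp

lemma blk_dist_nonneg: "0 \<le> blk_dist p x y"
  unfolding blk_dist_def by (simp add: sum_nonneg)

lemma blk_dist_sym: "blk_dist p x y = blk_dist p y x"
  unfolding blk_dist_def by (simp add: norm_minus_commute)

lemma blk_dist_refl[simp]: "blk_dist p x x = 0"
  unfolding blk_dist_def by simp

lemma blk_dist_triangle: "blk_dist p x z \<le> blk_dist p x y + blk_dist p y z"
proof -
  have "blk_dist p x z \<le> L2_set (\<lambda>i. norm (x i - y i) + norm (y i - z i)) {..<p}"
    unfolding blk_dist_L2
    by (rule L2_set_mono) (auto intro: norm_diff_triangle_le)
  also have "\<dots> \<le> blk_dist p x y + blk_dist p y z"
    unfolding blk_dist_L2 by (rule L2_set_triangle_ineq)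
  finally show ?thesis .
qed

lemma blk_dist_comp: "i < p \<Longrightarrow> norm (x i - y i) \<le> blk_dist p x y"
  unfolding blk_dist_L2 by (rule member_le_L2_set) auto

lemma blk_dist_le_sum: "blk_dist p x y \<le> (\<Sum>i<p. norm (x i - y i))"
  unfolding blk_dist_L2 by (rule L2_set_le_sum) auto


lemma blk_dist_cong: "(\<And>i. i < p \<Longrightarrow> x i = x' i) \<Longrightarrow> blk_dist p x c = blk_dist p x' c"
  unfolding blk_dist_def by simp

lemma blk_dist_meas[measurable]:
  assumes "\<And>i. i < p \<Longrightarrow> (\<lambda>\<omega>. f \<omega> i) \<in> borel_measurable N"
  shows "(\<lambda>\<omega>. blk_dist p (f \<omega>) c) \<in> borel_measurable N"
  unfolding blk_dist_def using assms by (auto intro!: borel_measurable_sum borel_measurable_sqrt)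

locale sp = prob_space M for M :: "'a measure" +
  fixes X :: "nat \<Rightarrow> 'a \<Rightarrow> 'b::euclidean_space"
  assumes Xm[measurable]: "\<And>i. X i \<in> borel_measurable M"
    and stat: "stationary M X"
begin

lemma stat_transfer:
  assumes E: "E \<in> sets (PiM {..<k} (\<lambda>_. borel))"
  shows "measure M {\<omega>\<in>space M. (\<lambda>i\<in>{..<k}. X (s+i) \<omega>) \<in> E}
       = measure M {\<omega>\<in>space M. (\<lambda>i\<in>{..<k}. X i \<omega>) \<in> E}"
proof -
  have m1: "(\<lambda>\<omega>. \<lambda>i\<in>{..<k}. X (s+i) \<omega>) \<in> measurable M (PiM {..<k} (\<lambda>_. borel))"
    by (rule measurable_restrict) simp
  have m2: "(\<lambda>\<omega>. \<lambda>i\<in>{..<k}. X i \<omega>) \<in> measurable M (PiM {..<k} (\<lambda>_. borel))"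
    by (rule measurable_restrict) simp
  have "measure M {\<omega>\<in>space M. (\<lambda>i\<in>{..<k}. X (s+i) \<omega>) \<in> E}
      = measure (distr M (PiM {..<k} (\<lambda>_. borel)) (\<lambda>\<omega>. \<lambda>i\<in>{..<k}. X (s+i) \<omega>)) E"
    using measure_distr[OF m1 E] by (simp add: vimage_def Int_def conj_commute)
  also have "\<dots> = measure (distr M (PiM {..<k} (\<lambda>_. borel)) (\<lambda>\<omega>. \<lambda>i\<in>{..<k}. X i \<omega>)) E"
    using stat unfolding stationary_def by metis
  also have "\<dots> = measure M {\<omega>\<in>space M. (\<lambda>i\<in>{..<k}. X i \<omega>) \<in> E}"
    using measure_distr[OF m2 E] by (simp add: vimage_def Int_def conj_commute)
  finally show ?thesis .
qed

lemma hit_transfer: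
  "measure M {\<omega>\<in>space M. blk_dist p (\<lambda>i. X (s+i) \<omega>) c \<le> d}
   = measure M {\<omega>\<in>space M. blk_dist p (\<lambda>i. X i \<omega>) c \<le> d}"
proof -
  let ?E = "{f\<in>space (PiM {..<p} (\<lambda>_. borel::'b measure)). blk_dist p f c \<le> d}"
  have E: "?E \<in> sets (PiM {..<p} (\<lambda>_. borel))"
  proof -
    have mf: "(\<lambda>f. blk_dist p f c) \<in> borel_measurable (PiM {..<p} (\<lambda>_. borel::'b measure))"
      by (rule blk_dist_meas) (rule measurable_component_singleton, simp)
    show ?thesis using mf by measurable
  qed
  have "\<And>s. {\<omega>\<in>space M. blk_dist p (\<lambda>i. X (s+i) \<omega>) c \<le> d}
       = {\<omega>\<in>space M. (\<lambda>i\<in>{..<p}. X (s+i) \<omega>) \<in> ?E}"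
  proof -
    fix s
    have "\<And>\<omega>. blk_dist p (\<lambda>i\<in>{..<p}. X (s+i) \<omega>) c = blk_dist p (\<lambda>i. X (s+i) \<omega>) c"
      by (rule blk_dist_cong) simp
    then show "{\<omega>\<in>space M. blk_dist p (\<lambda>i. X (s+i) \<omega>) c \<le> d}
       = {\<omega>\<in>space M. (\<lambda>i\<in>{..<p}. X (s+i) \<omega>) \<in> ?E}"
      by (auto simp: space_PiM)
  qed
  from this[of s] this[of 0] stat_transfer[OF E, of s] show ?thesis by simp
qed

lemma X_transfer:
  assumes "S \<in> sets borel"
  shows "measure M {\<omega>\<in>space M. X s \<omega> \<in> S} = measure M {\<omega>\<in>space M. X 0 \<omega> \<in> S}"
proof -
  let ?E = "{f\<in>space (PiM {..<1::nat} (\<lambda>_. borel::'b measure)). f 0 \<in> S}"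
  have E: "?E \<in> sets (PiM {..<1::nat} (\<lambda>_. borel))"
  proof -
    have "(\<lambda>f. f 0) \<in> measurable (PiM {..<1::nat} (\<lambda>_. borel::'b measure)) borel"
      by (rule measurable_component_singleton) simp
    from measurable_sets[OF this assms] show ?thesis by (simp add: vimage_def Int_def conj_commute)
  qed
  have "\<And>s. {\<omega>\<in>space M. X s \<omega> \<in> S} = {\<omega>\<in>space M. (\<lambda>i\<in>{..<1::nat}. X (s+i) \<omega>) \<in> ?E}"
    by (auto simp: space_PiM)
  from this[of s] this[of 0] stat_transfer[OF E, of s] show ?thesis by simp
qed

definition N :: "nat set \<Rightarrow> 'a measure" where
  "N J = sigma (space M) (\<Union>i\<in>J. {X i -` B \<inter> space M | B. B \<in> sets borel})"

lemma sets_N: "sets (N J) = gen_sigma M X J"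
  unfolding N_def gen_sigma_def by (rule sets_measure_of) auto

lemma space_N: "space (N J) = space M"
  unfolding N_def by (rule space_measure_of) auto

lemma X_N: "i \<in> J \<Longrightarrow> X i \<in> borel_measurable (N J)"
  unfolding measurable_def
  by (auto simp: space_N sets_N gen_sigma_def intro!: sigma_sets.Basic)

lemma gen_sigma_sub: "gen_sigma M X J \<subseteq> sets M"
  unfolding gen_sigma_def
  by (rule sets.sigma_sets_subset) auto

lemma hit_gen:
  assumes "{s..<s+p} \<subseteq> J"
  shows "{\<omega>\<in>space M. blk_dist p (\<lambda>i. X (s+i) \<omega>) c \<le> d} \<in> gen_sigma M X J"
proof -
  have "(\<lambda>\<omega>. blk_dist p (\<lambda>i. X (s+i) \<omega>) c) \<in> borel_measurable (N J)"
    by (rule blk_dist_meas) (use assms in \<open>auto intro!: X_N\<close>)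
  then have "{\<omega>\<in>space (N J). blk_dist p (\<lambda>i. X (s+i) \<omega>) c \<le> d} \<in> sets (N J)"
    by measurable
  then show ?thesis by (simp add: space_N sets_N)
qed

end


context sp begin

lemma partition_sum_le:
  assumes A: "fin_partition M F m A" and B: "fin_partition M G m' B"
    and F: "F \<subseteq> sets M" and G: "G \<subseteq> sets M"
  shows "(1/2) * (\<Sum>i<m. \<Sum>j<m'. \<bar>measure M (A i \<inter> B j) - measure M (A i) * measure M (B j)\<bar>) \<le> 1"
proof -
  have As: "\<And>i. i < m \<Longrightarrow> A i \<in> sets M" and Bs: "\<And>j. j < m' \<Longrightarrow> B j \<in> sets M"
    using A B F G unfolding fin_partition_def by auto
  have Ad: "disjoint_family_on A {..<m}" and Bd: "disjoint_family_on B {..<m'}"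
    and Au: "(\<Union>i<m. A i) = space M" and Bu: "(\<Union>j<m'. B j) = space M"
    using A B unfolding fin_partition_def by auto
  have sA: "(\<Sum>i<m. measure M (A i)) = 1"
    using finite_measure_finite_Union[of "{..<m}" A] As Ad Au prob_space by auto
  have sB: "(\<Sum>j<m'. measure M (B j)) = 1"
    using finite_measure_finite_Union[of "{..<m'}" B] Bs Bd Bu prob_space by auto
  have sAB: "(\<Sum>j<m'. measure M (A i \<inter> B j)) = measure M (A i)" if i: "i < m" for i
  proof -
    have "(\<Sum>j<m'. measure M (A i \<inter> B j)) = measure M (\<Union>j<m'. A i \<inter> B j)"
    proof (rule finite_measure_finite_Union[symmetric])
      show "disjoint_family_on (\<lambda>j. A i \<inter> B j) {..<m'}"
        using Bd unfolding disjoint_family_on_def by blast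
    qed (use As Bs i in auto)
    also have "(\<Union>j<m'. A i \<inter> B j) = A i"
      using Bu sets.sets_into_space[OF As[OF i]] by auto
    finally show ?thesis .
  qed
  have "(\<Sum>i<m. \<Sum>j<m'. \<bar>measure M (A i \<inter> B j) - measure M (A i) * measure M (B j)\<bar>)
     \<le> (\<Sum>i<m. \<Sum>j<m'. measure M (A i \<inter> B j) + measure M (A i) * measure M (B j))"
    by (intro sum_mono) (auto simp: abs_le_iff)
  also have "\<dots> = (\<Sum>i<m. measure M (A i)) + (\<Sum>i<m. measure M (A i)) * (\<Sum>j<m'. measure M (B j))"
    by (simp add: sum.distrib sAB sum_product)
  also have "\<dots> = 2" using sA sB by simp
  finally show ?thesis by simp
qed

lemma triv_partition: "fin_partition M (gen_sigma M X J) 1 (\<lambda>_. space M)"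
  unfolding fin_partition_def gen_sigma_def
  by (auto simp: disjoint_family_on_def intro: sigma_sets_top)

lemma beta_set_bdd:
  "bdd_above {(1/2) * (\<Sum>i<m. \<Sum>j<m'.
        \<bar>measure M (A i \<inter> B j) - measure M (A i) * measure M (B j)\<bar>) | m m' A B.
        fin_partition M (gen_sigma M X I) m A \<and> fin_partition M (gen_sigma M X J) m' B}"
  (is "bdd_above ?S")
proof (rule bdd_aboveI)
  fix x assume "x \<in> ?S"
  then obtain m m' A B where "x = (1/2) * (\<Sum>i<m. \<Sum>j<m'.
        \<bar>measure M (A i \<inter> B j) - measure M (A i) * measure M (B j)\<bar>)"
     and p: "fin_partition M (gen_sigma M X I) m A" "fin_partition M (gen_sigma M X J) m' B" by blast
  moreover note partition_sum_le[OF p gen_sigma_sub gen_sigma_sub]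
  ultimately show "x \<le> 1" by linarith
qed

lemma beta_set_0:
  "0 \<in> {(1/2) * (\<Sum>i<m. \<Sum>j<m'.
        \<bar>measure M (A i \<inter> B j) - measure M (A i) * measure M (B j)\<bar>) | m m' A B.
        fin_partition M (gen_sigma M X I) m A \<and> fin_partition M (gen_sigma M X J) m' B}"
proof -
  show ?thesis
    apply (simp only: mem_Collect_eq)
    apply (rule exI[of _ 1], rule exI[of _ 1], rule exI[of _ "\<lambda>_. space M"], rule exI[of _ "\<lambda>_. space M"])
    using triv_partition[of I] triv_partition[of J] by (simp add: prob_space)
qed

lemma beta_coeff_nonneg: "0 \<le> beta_coeff M (gen_sigma M X I) (gen_sigma M X J)"
  unfolding beta_coeff_def
  by (rule cSup_upper[OF beta_set_0 beta_set_bdd])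

lemma beta_coeff_le1: "beta_coeff M (gen_sigma M X I) (gen_sigma M X J) \<le> 1"
  unfolding beta_coeff_def
proof (rule cSup_least)
  show "{(1/2) * (\<Sum>i<m. \<Sum>j<m'.
        \<bar>measure M (A i \<inter> B j) - measure M (A i) * measure M (B j)\<bar>) | m m' A B.
        fin_partition M (gen_sigma M X I) m A \<and> fin_partition M (gen_sigma M X J) m' B} \<noteq> {}"
    using beta_set_0 by blast
next
  fix x assume "x \<in> {(1/2) * (\<Sum>i<m. \<Sum>j<m'.
        \<bar>measure M (A i \<inter> B j) - measure M (A i) * measure M (B j)\<bar>) | m m' A B.
        fin_partition M (gen_sigma M X I) m A \<and> fin_partition M (gen_sigma M X J) m' B}"
  then obtain m m' A B where "x = (1/2) * (\<Sum>i<m. \<Sum>j<m'.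
        \<bar>measure M (A i \<inter> B j) - measure M (A i) * measure M (B j)\<bar>)"
     and p: "fin_partition M (gen_sigma M X I) m A" "fin_partition M (gen_sigma M X J) m' B" by blast
  moreover note partition_sum_le[OF p gen_sigma_sub gen_sigma_sub]
  ultimately show "x \<le> 1" by linarith
qed

lemma beta_coeff_ge:
  assumes A: "A \<in> gen_sigma M X I" and B: "B \<in> gen_sigma M X J"
  shows "\<bar>measure M (A \<inter> B) - measure M A * measure M B\<bar> \<le> beta_coeff M (gen_sigma M X I) (gen_sigma M X J)"
proof -
  have AM: "A \<in> sets M" and BM: "B \<in> sets M" using A B gen_sigma_sub by auto
  define A' where "A' = (\<lambda>i::nat. if i = 0 then A else space M - A)"
  define B' where "B' = (\<lambda>i::nat. if i = 0 then B else space M - B)"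
  have l2: "{..<2::nat} = {0,1}" by auto
  have pA: "fin_partition M (gen_sigma M X I) 2 A'"
    unfolding fin_partition_def A'_def l2 using A sets.sets_into_space[OF AM]
    by (auto simp: disjoint_family_on_def gen_sigma_def intro: sigma_sets.Compl)
  have pB: "fin_partition M (gen_sigma M X J) 2 B'"
    unfolding fin_partition_def B'_def l2 using B sets.sets_into_space[OF BM]
    by (auto simp: disjoint_family_on_def gen_sigma_def intro: sigma_sets.Compl)
  let ?d = "\<bar>measure M (A \<inter> B) - measure M A * measure M B\<bar>"
  have e1: "measure M (A \<inter> (space M - B)) = measure M A - measure M (A \<inter> B)"
  proof -
    have "A \<inter> (space M - B) = A - (A \<inter> B)" using sets.sets_into_space[OF AM] by auto
    then show ?thesis using AM BM by (simp add: finite_measure_Diff)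
  qed
  have e2: "measure M ((space M - A) \<inter> B) = measure M B - measure M (A \<inter> B)"
  proof -
    have "(space M - A) \<inter> B = B - (A \<inter> B)" using sets.sets_into_space[OF BM] by auto
    then show ?thesis using AM BM by (simp add: finite_measure_Diff Int_commute)
  qed
  have e3: "measure M ((space M - A) \<inter> (space M - B)) = 1 - measure M A - measure M B + measure M (A \<inter> B)"
  proof -
    have "(space M - A) \<inter> (space M - B) = space M - (A \<union> B)" by auto
    moreover have "measure M (A \<union> B) = measure M A + measure M B - measure M (A \<inter> B)"
      using AM BM by (intro measure_Un3) (auto simp: fmeasurable_def less_top[symmetric])
    moreover have "measure M (space M - (A \<union> B)) = 1 - measure M (A \<union> B)"
      using AM BM by (intro prob_compl) auto
    ultimately show ?thesis by simp
  qed
  have cA: "measure M (space M - A) = 1 - measure M A" using AM prob_compl by simp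
  have cB: "measure M (space M - B) = 1 - measure M B" using BM prob_compl by simp
  have "(1/2) * (\<Sum>i<2. \<Sum>j<2. \<bar>measure M (A' i \<inter> B' j) - measure M (A' i) * measure M (B' j)\<bar>) = 2 * ?d"
    unfolding A'_def B'_def l2
    by (simp add: e1 e2 e3 cA cB algebra_simps abs_minus_commute)
  moreover have "(1/2) * (\<Sum>i<2. \<Sum>j<2. \<bar>measure M (A' i \<inter> B' j) - measure M (A' i) * measure M (B' j)\<bar>)
      \<le> beta_coeff M (gen_sigma M X I) (gen_sigma M X J)"
    unfolding beta_coeff_def
    by (rule cSup_upper[OF _ beta_set_bdd]) (use pA pB in blast)
  ultimately show ?thesis by (smt (verit) abs_ge_zero)
qed

lemma beta_mix_ge:
  assumes "1 \<le> l"
  shows "beta_coeff M (gen_sigma M X {1..l}) (gen_sigma M X {l+n..}) \<le> beta_mix M X n"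
  unfolding beta_mix_def
  by (rule cSUP_upper) (use assms beta_coeff_le1 in \<open>auto intro!: bdd_aboveI2[where M=1]\<close>)

lemma beta_mix_nonneg: "0 \<le> beta_mix M X n"
  using beta_mix_ge[of 1 n] beta_coeff_nonneg[of "{1..1}" "{1+n..}"] by simp

lemma alpha_ineq:
  assumes "1 \<le> l" and A: "A \<in> gen_sigma M X {1..l}" and B: "B \<in> gen_sigma M X {l+n..}"
  shows "measure M (A \<inter> B) \<le> measure M A * measure M B + beta_mix M X n"
  using beta_coeff_ge[OF A B] beta_mix_ge[OF assms(1), of n] by linarith

end


context sp begin

lemma ex_of_AE: assumes "AE \<omega> in M. P \<omega>" shows "\<exists>\<omega>\<in>space M. P \<omega>"
proof (rule ccontr)
  assume nex: "\<not> (\<exists>\<omega>\<in>space M. P \<omega>)"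
  have "AE \<omega> in M. False"
    using assms by (rule AE_mp) (use nex in \<open>auto intro!: AE_I2\<close>)
  then show False using AE_False by simp
qed

lemma AE_rv_support: "AE \<omega> in M. Y \<omega> \<in> rv_support M (Y :: 'a \<Rightarrow> 'c::second_countable_topology)"
proof -
  obtain B :: "'c set set" where B: "countable B" "\<And>C. C \<in> B \<Longrightarrow> open C"
       "\<And>S. open S \<Longrightarrow> \<exists>U. U \<subseteq> B \<and> S = \<Union>U"
    using univ_second_countable by blast
  define T where "T = {U\<in>B. AE \<omega> in M. Y \<omega> \<notin> U}"
  have "countable T" using B(1) unfolding T_def by simp
  then have ae: "AE \<omega> in M. \<forall>U\<in>T. Y \<omega> \<notin> U"
    by (rule AE_ball_countable'[rotated]) (auto simp: T_def)
  have sup: "y \<in> rv_support M Y" if y: "\<forall>U\<in>T. y \<notin> U" for y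
    unfolding rv_support_def
  proof (rule InterI, clarify)
    fix C assume C: "closed C" "AE \<omega> in M. Y \<omega> \<in> C"
    show "y \<in> C"
    proof (rule ccontr)
      assume "y \<notin> C"
      obtain U where U: "U \<subseteq> B" "- C = \<Union>U" using B(3)[of "- C"] C(1) by (auto simp: open_Compl)
      then obtain V where V: "V \<in> U" "y \<in> V" using \<open>y \<notin> C\<close> by auto
      have "AE \<omega> in M. Y \<omega> \<notin> V" using C(2) by eventually_elim (use U V in auto)
      then have "V \<in> T" using U V unfolding T_def by auto
      then show False using y V by auto
    qed
  qed
  show ?thesis using ae by eventually_elim (use sup in auto)
qed

lemma rv_support_pos:
  assumes "b \<in> rv_support M Y" "\<eta> > 0"
  shows "\<not> (AE \<omega> in M. dist (Y \<omega>) b \<ge> \<eta>)"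
proof
  assume "AE \<omega> in M. dist (Y \<omega>) b \<ge> \<eta>"
  moreover have "closed {y. dist y b \<ge> \<eta>}"
    by (intro closed_Collect_le continuous_intros)
  ultimately have "b \<in> {y. dist y b \<ge> \<eta>}"
    using assms(1) unfolding rv_support_def by auto
  then show False using assms(2) by simp
qed

lemma blk_vec_space: "blk_vec X p \<omega> \<in> blk_space p"
  unfolding blk_vec_def blk_space_def by auto

lemma blk_vec_meas[measurable]: "(\<lambda>\<omega>. blk_dist p (blk_vec X p \<omega>) c) \<in> borel_measurable M"
  by (rule blk_dist_meas) (simp add: blk_vec_def)

lemma blk_vec_dist: "blk_dist p (blk_vec X p \<omega>) c = blk_dist p (\<lambda>i. X (1+i) \<omega>) c"
  by (rule blk_dist_cong) (simp add: blk_vec_def)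

lemma AE_blk_support:
  assumes p: "1 \<le> p"
  shows "AE \<omega> in M. blk_vec X p \<omega> \<in> blk_support M X p"
proof -
  obtain D :: "'b set" where D: "countable D" "\<And>U. open U \<Longrightarrow> U \<noteq> {} \<Longrightarrow> \<exists>d\<in>D. d \<in> U"
    by (rule countable_dense_setE) blast
  define Tup where "Tup = (\<lambda>f i. if i < p then f i else 0) ` (PiE {..<p} (\<lambda>_. D))"
  have cTup: "countable Tup" unfolding Tup_def
    by (intro countable_image countable_PiE) (auto simp: D(1))
  define T where "T = {cq \<in> Tup \<times> {q\<in>\<rat>. q > 0}. AE \<omega> in M. blk_dist p (blk_vec X p \<omega>) (fst cq) \<ge> snd cq}"
  have "countable T" unfolding T_def
    by (rule countable_subset[of _ "Tup \<times> \<rat>"]) (auto intro: cTup countable_rat)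
  then have ae: "AE \<omega> in M. \<forall>cq\<in>T. blk_dist p (blk_vec X p \<omega>) (fst cq) \<ge> snd cq"
    by (rule AE_ball_countable'[rotated]) (auto simp: T_def)
  have sup: "x \<in> blk_support M X p"
    if x: "x \<in> blk_space p" "\<forall>cq\<in>T. blk_dist p x (fst cq) \<ge> snd cq" for x
    unfolding blk_support_def
  proof (intro IntI InterI, clarify)
    fix C assume C: "blk_closed p C" "AE \<omega> in M. blk_vec X p \<omega> \<in> C"
    show "x \<in> C"
    proof (rule ccontr)
      assume "x \<notin> C"
      then obtain \<delta> where \<delta>: "\<delta> > 0" "\<forall>y\<in>C. blk_dist p x y \<ge> \<delta>"
        using C(1) x(1) unfolding blk_closed_def by (meson not_le)
      have "\<forall>i<p. \<exists>d\<in>D. dist (x i) d < \<delta> / (3 * p)"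
      proof (intro allI impI)
        fix i assume "i < p"
        have "\<delta> / (3 * p) > 0" using \<delta>(1) p by (auto intro!: divide_pos_pos)
        then have "ball (x i) (\<delta> / (3 * p)) \<noteq> {}" by (metis centre_in_ball empty_iff)
        then obtain d where "d \<in> D" "d \<in> ball (x i) (\<delta> / (3 * p))" using D(2)[of "ball (x i) (\<delta> / (3 * p))"] by auto
        then show "\<exists>d\<in>D. dist (x i) d < \<delta> / (3 * p)" by auto
      qed
      then obtain f where f: "\<And>i. i < p \<Longrightarrow> f i \<in> D \<and> dist (x i) (f i) < \<delta> / (3 * p)" by metis
      define c where "c = (\<lambda>i. if i < p then f i else 0)"
      have cT: "c \<in> Tup" unfolding Tup_def c_def
        by (rule image_eqI[where x="restrict f {..<p}"]) (auto simp: f)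
      have "blk_dist p x c \<le> (\<Sum>i<p. norm (x i - c i))" by (rule blk_dist_le_sum)
      also have "\<dots> < (\<Sum>i<p. \<delta> / (3 * p))"
        by (rule sum_strict_mono) (use p f in \<open>auto simp: c_def dist_norm lessThan_empty_iff\<close>)
      also have "\<dots> = \<delta> / 3" using p by simp
      finally have xc: "blk_dist p x c < \<delta> / 3" .
      obtain q where q: "q \<in> \<rat>" "\<delta> / 3 < q" "q < 2 * \<delta> / 3"
        using Rats_dense_in_real[of "\<delta>/3" "2*\<delta>/3"] \<delta>(1) by auto
      have "AE \<omega> in M. blk_dist p (blk_vec X p \<omega>) c \<ge> q"
        using C(2)
      proof eventually_elim
        case (elim \<omega>)
        have "\<delta> \<le> blk_dist p x (blk_vec X p \<omega>)" using \<delta>(2) elim by auto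
        also have "\<dots> \<le> blk_dist p x c + blk_dist p c (blk_vec X p \<omega>)" by (rule blk_dist_triangle)
        finally show ?case using xc q by (simp add: blk_dist_sym)
      qed
      then have "(c, q) \<in> T" unfolding T_def using cT q \<delta>(1) by auto
      then have "blk_dist p x c \<ge> q" using x(2) by auto
      then show False using xc q by simp
    qed
  qed (use x in auto)
  show ?thesis using ae
    by eventually_elim (use blk_vec_space sup in auto)
qed

lemma blk_support_nonempty: "1 \<le> p \<Longrightarrow> blk_support M X p \<noteq> {}"
  using ex_of_AE[OF AE_blk_support] by auto

lemma blk_support_space: "x \<in> blk_support M X p \<Longrightarrow> x \<in> blk_space p"
  unfolding blk_support_def by auto

lemma blk_support_pos:
  assumes x: "x \<in> blk_support M X p" and xc: "blk_dist p x c < R"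
  shows "measure M {\<omega>\<in>space M. blk_dist p (blk_vec X p \<omega>) c < R} > 0"
proof (rule ccontr)
  assume "\<not> ?thesis"
  then have z: "measure M {\<omega>\<in>space M. blk_dist p (blk_vec X p \<omega>) c < R} = 0"
    using measure_nonneg[of M "{\<omega>\<in>space M. blk_dist p (blk_vec X p \<omega>) c < R}"] by linarith
  define C where "C = {y\<in>blk_space p. blk_dist p y c \<ge> R}"
  have "blk_closed p C" unfolding blk_closed_def
  proof (intro conjI ballI impI)
    show "C \<subseteq> blk_space p" unfolding C_def by auto
  next
    fix x' assume x': "x' \<in> blk_space p" "\<forall>\<delta>>0. \<exists>y\<in>C. blk_dist p x' y < \<delta>"
    have "blk_dist p x' c \<ge> R - \<delta>" if "\<delta> > 0" for \<delta>
    proof -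
      obtain y where y: "y \<in> C" "blk_dist p x' y < \<delta>" using x'(2) \<open>\<delta> > 0\<close> by auto
      have "blk_dist p y c \<le> blk_dist p y x' + blk_dist p x' c" by (rule blk_dist_triangle)
      then show ?thesis using y C_def by (simp add: blk_dist_sym)
    qed
    then have "\<And>\<delta>. \<delta> > 0 \<Longrightarrow> R \<le> blk_dist p x' c + \<delta>" by fastforce
    then have "blk_dist p x' c \<ge> R"
      by (rule field_le_epsilon)
    then show "x' \<in> C" using x' C_def by auto
  qed
  moreover have "AE \<omega> in M. blk_vec X p \<omega> \<in> C"
  proof -
    have "AE \<omega> in M. \<not> blk_dist p (blk_vec X p \<omega>) c < R"
      by (subst AE_iff_measurable[OF _ refl]) (use z in \<open>auto simp: emeasure_eq_measure\<close>)
    then show ?thesis by eventually_elim (auto simp: C_def blk_vec_space)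
  qed
  ultimately have "x \<in> C" using x unfolding blk_support_def by auto
  then show False using xc C_def by simp
qed

lemma rho_lower:
  assumes "c \<in> blk_support M X p"
  shows "rho M X p d \<le> measure M {\<omega>\<in>space M. blk_dist p (blk_vec X p \<omega>) c \<le> d}"
  unfolding rho_def by (rule cINF_lower) (use assms in \<open>auto intro!: bdd_belowI2[where m=0]\<close>)

lemma rho_le1: "1 \<le> p \<Longrightarrow> rho M X p d \<le> 1"
  using blk_support_nonempty[of p] rho_lower[of _ p d] by (meson ex_in_conv order_trans prob_le_1)

lemma rho_nonneg: "1 \<le> p \<Longrightarrow> 0 \<le> rho M X p d"
  unfolding rho_def by (rule cINF_greatest) (auto simp: blk_support_nonempty)

end


locale sp2 = sp +
  fixes MM :: "'b set"
  assumes MM: "MM = rv_support M (X 1)" and cpt: "compact MM"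
begin

lemma MM_closed: "closed MM" using cpt compact_imp_closed by blast

lemma AE_X_MM: "AE \<omega> in M. X i \<omega> \<in> MM"
proof -
  have S: "- MM \<in> sets borel" using MM_closed by (simp add: open_Compl borel_open)
  have Sm: "{\<omega>\<in>space M. X j \<omega> \<notin> MM} \<in> sets M" for j
    using measurable_sets[OF Xm S, of j] by (simp add: vimage_def Int_def conj_commute)
  have "AE \<omega> in M. X 1 \<omega> \<in> MM" using AE_rv_support[of "X 1"] MM by simp
  then have "emeasure M {\<omega>\<in>space M. X 1 \<omega> \<in> - MM} = 0"
    by (subst (asm) AE_iff_measurable[OF _ refl]) (use Sm in \<open>auto\<close>)
  then have "measure M {\<omega>\<in>space M. X 1 \<omega> \<in> - MM} = 0" by (simp add: measure_def)
  then have "measure M {\<omega>\<in>space M. X i \<omega> \<in> - MM} = 0"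
    using X_transfer[OF S, of i] X_transfer[OF S, of 1] by simp
  then have "emeasure M {\<omega>\<in>space M. X i \<omega> \<in> - MM} = 0"
    using Sm by (simp add: emeasure_eq_measure)
  then show ?thesis
    by (subst AE_iff_measurable[OF _ refl]) (use Sm in \<open>auto\<close>)
qed

lemma MM_nonempty: "MM \<noteq> {}"
  using ex_of_AE[OF AE_X_MM[of 1]] by auto

lemma support_coord:
  assumes x: "x \<in> blk_support M X p" and i: "i < p"
  shows "x i \<in> MM"
proof -
  define C where "C = {y\<in>blk_space p. \<forall>i<p. y i \<in> MM}"
  have "blk_closed p C" unfolding blk_closed_def
  proof (intro conjI ballI impI)
    show "C \<subseteq> blk_space p" unfolding C_def by auto
  next
    fix x' assume x': "x' \<in> blk_space p" "\<forall>\<delta>>0. \<exists>y\<in>C. blk_dist p x' y < \<delta>"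
    have "x' j \<in> MM" if j: "j < p" for j
    proof -
      have "\<forall>e>0. \<exists>y\<in>MM. dist y (x' j) < e"
      proof (intro allI impI)
        fix e :: real assume "e > 0"
        then obtain y where y: "y \<in> C" "blk_dist p x' y < e" using x'(2) by auto
        have "norm (x' j - y j) \<le> blk_dist p x' y" using j by (rule blk_dist_comp)
        then show "\<exists>y\<in>MM. dist y (x' j) < e"
          using y j C_def by (auto simp: dist_norm norm_minus_commute intro!: bexI[of _ "y j"])
      qed
      then show ?thesis using closed_approachable[OF MM_closed] by blast
    qed
    then show "x' \<in> C" using x' C_def by auto
  qed
  moreover have "AE \<omega> in M. blk_vec X p \<omega> \<in> C"
  proof -
    have "AE \<omega> in M. \<forall>i\<in>{..<p}. X (i+1) \<omega> \<in> MM"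
      by (rule AE_ball_countable') (auto intro: AE_X_MM)
    then show ?thesis by eventually_elim (auto simp: C_def blk_space_def blk_vec_def)
  qed
  ultimately have "x \<in> C" using x unfolding blk_support_def by auto
  then show ?thesis using i C_def by auto
qed

lemma rho_pos:
  assumes p: "1 \<le> p" and d: "\<delta> > 0"
  shows "rho M X p \<delta> > 0"
proof -
  define \<eta> where "\<eta> = \<delta> / (2 * p)"
  have \<eta>: "\<eta> > 0" using p d unfolding \<eta>_def by (auto intro!: divide_pos_pos)
  obtain F where F: "finite F" "MM \<subseteq> (\<Union>x\<in>F. ball x \<eta>)"
    using cpt \<eta> unfolding compact_eq_totally_bounded by metis
  define Tup where "Tup = (\<lambda>g i. if i < p then g i else 0) ` (PiE {..<p} (\<lambda>_. F))"
  have fTup: "finite Tup" unfolding Tup_def using F(1) by (auto intro!: finite_PiE)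
  define P where "P = (\<lambda>c. measure M {\<omega>\<in>space M. blk_dist p (blk_vec X p \<omega>) c < \<delta>/2})"
  define Good where "Good = {c\<in>Tup. P c > 0}"
  have key: "\<exists>c\<in>Good. P c \<le> measure M {\<omega>\<in>space M. blk_dist p (blk_vec X p \<omega>) x \<le> \<delta>}"
    if x: "x \<in> blk_support M X p" for x
  proof -
    have "\<forall>i<p. \<exists>f\<in>F. x i \<in> ball f \<eta>" using support_coord[OF x] F(2) by blast
    then obtain g where g: "\<And>i. i < p \<Longrightarrow> g i \<in> F \<and> x i \<in> ball (g i) \<eta>" by metis
    define c where "c = (\<lambda>i. if i < p then g i else 0)"
    have cT: "c \<in> Tup" unfolding Tup_def c_def
      by (rule image_eqI[where x="restrict g {..<p}"]) (auto simp: g)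
    have "blk_dist p x c \<le> (\<Sum>i<p. norm (x i - c i))" by (rule blk_dist_le_sum)
    also have "\<dots> < (\<Sum>i<p. \<eta>)"
      by (rule sum_strict_mono) (use p g in \<open>auto simp: c_def dist_norm lessThan_empty_iff norm_minus_commute\<close>)
    also have "\<dots> = \<delta> / 2" using p by (simp add: \<eta>_def)
    finally have xc: "blk_dist p x c < \<delta> / 2" .
    have "P c > 0" unfolding P_def by (rule blk_support_pos[OF x xc])
    then have cG: "c \<in> Good" using cT Good_def by auto
    have "P c \<le> measure M {\<omega>\<in>space M. blk_dist p (blk_vec X p \<omega>) x \<le> \<delta>}"
      unfolding P_def
    proof (rule finite_measure_mono)
      show "{\<omega>\<in>space M. blk_dist p (blk_vec X p \<omega>) x \<le> \<delta>} \<in> sets M" by measurable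
      show "{\<omega> \<in> space M. blk_dist p (blk_vec X p \<omega>) c < \<delta> / 2}
          \<subseteq> {\<omega> \<in> space M. blk_dist p (blk_vec X p \<omega>) x \<le> \<delta>}"
      proof clarify
        fix \<omega> assume "\<omega> \<in> space M" "blk_dist p (blk_vec X p \<omega>) c < \<delta> / 2"
        moreover have "blk_dist p (blk_vec X p \<omega>) x \<le> blk_dist p (blk_vec X p \<omega>) c + blk_dist p c x"
          by (rule blk_dist_triangle)
        ultimately show "blk_dist p (blk_vec X p \<omega>) x \<le> \<delta>" using xc by (simp add: blk_dist_sym)
      qed
    qed
    then show ?thesis using cG by auto
  qed
  have fG: "finite Good" using fTup Good_def by auto
  have nG: "Good \<noteq> {}" using key blk_support_nonempty[OF p] by blast
  define m0 where "m0 = Min (P ` Good)"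
  have m0: "m0 > 0" unfolding m0_def using fG nG by (subst Min_gr_iff) (auto simp: Good_def)
  have "m0 \<le> rho M X p \<delta>"
    unfolding rho_def
  proof (rule cINF_greatest)
    show "blk_support M X p \<noteq> {}" by (rule blk_support_nonempty[OF p])
  next
    fix x assume "x \<in> blk_support M X p"
    then obtain c where "c \<in> Good" "P c \<le> measure M {\<omega>\<in>space M. blk_dist p (blk_vec X p \<omega>) x \<le> \<delta>}"
      using key by blast
    moreover have "m0 \<le> P c" unfolding m0_def using fG \<open>c \<in> Good\<close> by simp
    ultimately show "m0 \<le> measure M {\<omega>\<in>space M. blk_dist p (blk_vec X p \<omega>) x \<le> \<delta>}" by linarith
  qed
  then show ?thesis using m0 by linarith
qed

definition sep :: "nat \<Rightarrow> real \<Rightarrow> (nat \<Rightarrow> 'b) set \<Rightarrow> bool" where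
  "sep p e T \<longleftrightarrow> (\<forall>c\<in>T. \<forall>c'\<in>T. c \<noteq> c' \<longrightarrow> blk_dist p c c' > e)"

lemma packing_card:
  assumes p: "1 \<le> p" and T: "finite T" "T \<subseteq> blk_support M X p" "sep p (2*e) T"
  shows "real (card T) * rho M X p e \<le> 1"
proof -
  define E where "E = (\<lambda>c. {\<omega>\<in>space M. blk_dist p (blk_vec X p \<omega>) c \<le> e})"
  have Es: "E c \<in> sets M" for c unfolding E_def by measurable
  have disj: "disjoint_family_on E T"
    unfolding disjoint_family_on_def
  proof (intro ballI impI)
    fix c c' assume c: "c \<in> T" "c' \<in> T" "c \<noteq> c'"
    show "E c \<inter> E c' = {}"
    proof (rule ccontr)
      assume "E c \<inter> E c' \<noteq> {}"
      then obtain \<omega> where "\<omega> \<in> E c" "\<omega> \<in> E c'" by auto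
      then have "blk_dist p (blk_vec X p \<omega>) c \<le> e" "blk_dist p (blk_vec X p \<omega>) c' \<le> e"
        unfolding E_def by auto
      moreover have "blk_dist p c c' \<le> blk_dist p c (blk_vec X p \<omega>) + blk_dist p (blk_vec X p \<omega>) c'"
        by (rule blk_dist_triangle)
      moreover have "blk_dist p c c' > 2 * e" using T(3) c unfolding sep_def by auto
      ultimately show False by (simp add: blk_dist_sym)
    qed
  qed
  have "real (card T) * rho M X p e \<le> (\<Sum>c\<in>T. measure M (E c))"
    by (rule sum_bounded_below) (use T(2) in \<open>auto simp: E_def intro: rho_lower\<close>)
  also have "\<dots> = measure M (\<Union>c\<in>T. E c)"
    by (rule finite_measure_finite_Union[symmetric]) (use T(1) Es disj in auto)
  also have "\<dots> \<le> 1" by (rule prob_le_1)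
  finally show ?thesis .
qed

lemma packing_exists:
  assumes p: "1 \<le> p" and e: "e > 0"
  shows "\<exists>S. finite S \<and> S \<subseteq> blk_support M X p \<and> real (card S) * rho M X p e \<le> 1
      \<and> (\<forall>x\<in>blk_support M X p. \<exists>c\<in>S. blk_dist p x c \<le> 2 * e)"
proof -
  define Q where "Q = (\<lambda>n. \<exists>T. finite T \<and> T \<subseteq> blk_support M X p \<and> sep p (2*e) T \<and> card T = n)"
  have r: "rho M X p e > 0" by (rule rho_pos[OF p e])
  have Q0: "Q 0" unfolding Q_def by (rule exI[of _ "{}"]) (auto simp: sep_def)
  have Qb: "\<forall>n. Q n \<longrightarrow> n \<le> nat \<lceil>1 / rho M X p e\<rceil>"
  proof (intro allI impI)
    fix n assume "Q n"
    then obtain T where T: "finite T" "T \<subseteq> blk_support M X p" "sep p (2*e) T" "card T = n"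
      unfolding Q_def by blast
    have "real n * rho M X p e \<le> 1" using packing_card[OF p T(1-3)] T(4) by simp
    then have "real n \<le> 1 / rho M X p e" using r by (simp add: field_simps)
    then have "real n \<le> real (nat \<lceil>1 / rho M X p e\<rceil>)" by linarith
    then show "n \<le> nat \<lceil>1 / rho M X p e\<rceil>" by linarith
  qed
  obtain n where n: "Q n" "\<forall>y. Q y \<longrightarrow> y \<le> n" using Nat.ex_has_greatest_nat[OF Q0 Qb] by blast
  then obtain S where S: "finite S" "S \<subseteq> blk_support M X p" "sep p (2*e) S" "card S = n"
    unfolding Q_def by blast
  have cov: "\<exists>c\<in>S. blk_dist p x c \<le> 2 * e" if x: "x \<in> blk_support M X p" for x
  proof (rule ccontr)
    assume "\<not> ?thesis"
    then have far: "\<forall>c\<in>S. blk_dist p x c > 2 * e" by auto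
    then have "x \<notin> S" using e by fastforce
    have "sep p (2*e) (insert x S)"
      using S(3) far unfolding sep_def by (auto simp: blk_dist_sym)
    then have "Q (Suc n)" unfolding Q_def
      using S x \<open>x \<notin> S\<close> by (intro exI[of _ "insert x S"]) auto
    then show False using n(2) by fastforce
  qed
  show ?thesis using S cov packing_card[OF p S(1-3)] by blast
qed

end


lemma hd_char:
  fixes S T :: "'b::euclidean_space set"
  assumes S: "finite S" "S \<noteq> {}" and T: "compact T" "T \<noteq> {}"
  shows "hausdorff_dist S T \<le> e \<longleftrightarrow> (\<forall>a\<in>S. infdist a T \<le> e) \<and> (\<forall>b\<in>T. infdist b S \<le> e)"
proof -
  have b1: "bdd_above ((\<lambda>a. infdist a T) ` S)" using S by (intro bdd_above_finite) simp
  have "compact ((\<lambda>b. infdist b S) ` T)"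
    by (rule compact_continuous_image[OF continuous_on_infdist[OF continuous_on_id] T(1)])
  then have b2: "bdd_above ((\<lambda>b. infdist b S) ` T)"
    by (intro bounded_imp_bdd_above compact_imp_bounded)
  show ?thesis unfolding hausdorff_dist_def max.bounded_iff
    using cSUP_le_iff[OF S(2) b1] cSUP_le_iff[OF T(2) b2] by simp
qed

lemma infdist_finite_le:
  fixes S :: "'b::euclidean_space set"
  assumes "finite S" "S \<noteq> {}"
  shows "infdist b S \<le> e \<longleftrightarrow> (\<exists>s\<in>S. dist b s \<le> e)"
proof
  assume "infdist b S \<le> e"
  moreover obtain s where "s \<in> S" "infdist b S = dist b s"
    using infdist_attains_inf[OF finite_imp_closed[OF assms(1)] assms(2)] by metis
  ultimately show "\<exists>s\<in>S. dist b s \<le> e" by auto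
next
  assume "\<exists>s\<in>S. dist b s \<le> e"
  then show "infdist b S \<le> e" using infdist_le order_trans by blast
qed

context sp2 begin

lemma dense_seq: "\<exists>g::nat \<Rightarrow> 'b. range g \<subseteq> MM \<and> (\<forall>b\<in>MM. \<forall>e>0. \<exists>k. dist b (g k) < e)"
proof -
  have "\<forall>k::nat. \<exists>F. finite F \<and> F \<subseteq> MM \<and> MM \<subseteq> (\<Union>x\<in>F. ball x (1 / (Suc k)))"
    using seq_compact_imp_totally_bounded[OF compact_imp_seq_compact[OF cpt]] by simp
  then obtain F where F: "\<And>k. finite (F k) \<and> F k \<subseteq> MM \<and> MM \<subseteq> (\<Union>x\<in>F k. ball x (1 / (Suc k)))"
    by metis
  define D where "D = (\<Union>k. F k)"
  have cD: "countable D" unfolding D_def using F by (auto intro: countable_finite)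
  have DM: "D \<subseteq> MM" unfolding D_def using F by auto
  have dens: "\<forall>b\<in>MM. \<forall>e>0. \<exists>d\<in>D. dist b d < e"
  proof (intro ballI allI impI)
    fix b e assume b: "b \<in> MM" and e: "(e::real) > 0"
    obtain k where k: "1 / Suc k < e" using nat_approx_posE[OF e] by blast
    obtain x where "x \<in> F k" "b \<in> ball x (1 / Suc k)" using F[of k] b by blast
    then have "x \<in> D" "dist b x < e" using k unfolding D_def by (auto simp: dist_commute)
    then show "\<exists>d\<in>D. dist b d < e" by blast
  qed
  obtain b0 where "b0 \<in> MM" using MM_nonempty by auto
  then obtain d0 where "d0 \<in> D" using dens by (meson zero_less_one)
  then have "D \<noteq> {}" by auto
  define g where "g = from_nat_into D"
  have "range g = D" unfolding g_def using \<open>D \<noteq> {}\<close> cD by simp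
  then show ?thesis using DM dens by (intro exI[of _ g]) auto
qed

lemma good_set:
  assumes n: "1 \<le> n" and g: "range g \<subseteq> MM" "\<forall>b\<in>MM. \<forall>e>0. \<exists>k. dist b (g k) < e"
  shows "{\<omega>\<in>space M. hausdorff_dist (sample X n \<omega>) MM \<le> \<epsilon>} =
    {\<omega>\<in>space M. (\<forall>i\<in>{1..n}. infdist (X i \<omega>) MM \<le> \<epsilon>) \<and> (\<forall>k. \<exists>i\<in>{1..n}. dist (g k) (X i \<omega>) \<le> \<epsilon>)}"
proof -
  have S: "finite (sample X n \<omega>)" "sample X n \<omega> \<noteq> {}" for \<omega>
    using n unfolding sample_def by auto
  have "(\<forall>b\<in>MM. infdist b (sample X n \<omega>) \<le> \<epsilon>) \<longleftrightarrow> (\<forall>k. infdist (g k) (sample X n \<omega>) \<le> \<epsilon>)" for \<omega>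
  proof
    assume "\<forall>b\<in>MM. infdist b (sample X n \<omega>) \<le> \<epsilon>"
    then show "\<forall>k. infdist (g k) (sample X n \<omega>) \<le> \<epsilon>" using g(1) by auto
  next
    assume A: "\<forall>k. infdist (g k) (sample X n \<omega>) \<le> \<epsilon>"
    show "\<forall>b\<in>MM. infdist b (sample X n \<omega>) \<le> \<epsilon>"
    proof
      fix b assume b: "b \<in> MM"
      have "infdist b (sample X n \<omega>) \<le> \<epsilon> + e" if e: "e > 0" for e
      proof -
        obtain k where "dist b (g k) < e" using g(2) b e by blast
        moreover have "infdist b (sample X n \<omega>) \<le> infdist (g k) (sample X n \<omega>) + dist b (g k)"
          by (rule infdist_triangle)
        ultimately show ?thesis using A[rule_format, of k] by linarith
      qed
      then show "infdist b (sample X n \<omega>) \<le> \<epsilon>" by (rule field_le_epsilon)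
    qed
  qed
  then have "hausdorff_dist (sample X n \<omega>) MM \<le> \<epsilon> \<longleftrightarrow> (\<forall>i\<in>{1..n}. infdist (X i \<omega>) MM \<le> \<epsilon>) \<and> (\<forall>k. \<exists>i\<in>{1..n}. dist (g k) (X i \<omega>) \<le> \<epsilon>)" for \<omega>
    unfolding hd_char[OF S cpt MM_nonempty] infdist_finite_le[OF S]
    by (simp add: sample_def)
  then show ?thesis by blast
qed

lemma good_meas:
  assumes n: "1 \<le> n"
  shows "{\<omega>\<in>space M. hausdorff_dist (sample X n \<omega>) MM \<le> \<epsilon>} \<in> sets M"
proof -
  from dense_seq obtain g :: "nat \<Rightarrow> 'b" where g0: "range g \<subseteq> MM \<and> (\<forall>b\<in>MM. \<forall>e>0. \<exists>k. dist b (g k) < e)" ..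
  then have g: "range g \<subseteq> MM" "\<forall>b\<in>MM. \<forall>e>0. \<exists>k. dist b (g k) < e" by auto
  have Xset: "{\<omega>\<in>space M. X i \<omega> \<in> C} \<in> sets M" if C: "closed C" for C i
  proof -
    have "X i -` C \<inter> space M \<in> sets M" by (rule measurable_sets[OF Xm borel_closed[OF C]])
    moreover have "X i -` C \<inter> space M = {\<omega>\<in>space M. X i \<omega> \<in> C}" by auto
    ultimately show ?thesis by simp
  qed
  have c1: "closed {y. infdist y MM \<le> \<epsilon>}" by (intro closed_Collect_le continuous_intros)
  have p1: "{\<omega>\<in>space M. infdist (X i \<omega>) MM \<le> \<epsilon>} \<in> sets M" for i
    using Xset[OF c1, of i] by simp
  have p2: "{\<omega>\<in>space M. dist (g k) (X i \<omega>) \<le> \<epsilon>} \<in> sets M" for k i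
    using Xset[OF closed_cball[of "g k" \<epsilon>], of i] by (simp add: mem_cball)
  show ?thesis unfolding good_set[OF n g]
    by (intro sets.sets_Collect_conj sets.sets_Collect_finite_All sets.sets_Collect_countable_All
        sets.sets_Collect_finite_Ex p1 p2 finite_atLeastAtMost)
qed

end


context sp2 begin

lemma hit_rho:
  assumes c: "c \<in> blk_support M X r"
  shows "rho M X r d \<le> measure M {\<omega>\<in>space M. blk_dist r (\<lambda>i. X (s+i) \<omega>) c \<le> d}"
proof -
  have "{\<omega>\<in>space M. blk_dist r (blk_vec X r \<omega>) c \<le> d} = {\<omega>\<in>space M. blk_dist r (\<lambda>i. X (1+i) \<omega>) c \<le> d}"
    by (simp add: blk_vec_dist)
  then have "measure M {\<omega>\<in>space M. blk_dist r (blk_vec X r \<omega>) c \<le> d}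
      = measure M {\<omega>\<in>space M. blk_dist r (\<lambda>i. X (s+i) \<omega>) c \<le> d}"
    using hit_transfer[of r 1 c d] hit_transfer[of r s c d] by simp
  then show ?thesis using rho_lower[OF c, of d] by simp
qed

lemma miss_bound:
  assumes r: "1 \<le> r" and c: "c \<in> blk_support M X r"
  shows "measure M {\<omega>\<in>space M. \<forall>j<m. \<not> blk_dist r (\<lambda>i. X (2*j*r+1+i) \<omega>) c \<le> d}
     \<le> (1 - rho M X r d) ^ m + m * beta_mix M X r"
proof -
  define H where "H = (\<lambda>s. {\<omega>\<in>space M. blk_dist r (\<lambda>i. X (s+i) \<omega>) c \<le> d})"
  define Q where "Q = (\<lambda>j. {\<omega>\<in>space M. \<forall>j'<j. \<omega> \<notin> H (2*j'*r+1)})"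
  define \<rho> where "\<rho> = rho M X r d"
  define \<beta> where "\<beta> = beta_mix M X r"
  have \<rho>: "0 \<le> \<rho>" "\<rho> \<le> 1" unfolding \<rho>_def using rho_nonneg[OF r] rho_le1[OF r] by auto
  have \<beta>: "0 \<le> \<beta>" unfolding \<beta>_def by (rule beta_mix_nonneg)
  have Hg: "H s \<in> gen_sigma M X J" if "{s..<s+r} \<subseteq> J" for s J
    unfolding H_def by (rule hit_gen[OF that])
  have HM: "H s \<in> sets M" for s using Hg[of s "{s..<s+r}"] gen_sigma_sub by auto
  have Hp: "\<rho> \<le> measure M (H s)" for s unfolding H_def \<rho>_def by (rule hit_rho[OF c])
  have Qs: "Q (Suc j) = Q j \<inter> (space M - H (2*j*r+1))" for j
    unfolding Q_def by (auto simp: less_Suc_eq)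
  have Qg: "Q j \<in> gen_sigma M X {1..2*j*r - r}" if j: "1 \<le> j" for j
  proof -
    have "Q j = space (N {1..2*j*r - r}) - (\<Union>j'\<in>{..<j}. H (2*j'*r+1))"
      unfolding Q_def space_N using sets.sets_into_space[OF HM] by auto
    also have "\<dots> \<in> sets (N {1..2*j*r - r})"
    proof (intro sets.Diff sets.top sets.finite_UN finite_lessThan)
      fix j' assume "j' \<in> {..<j}"
      then have "j' + 1 \<le> j" by auto
      then have "2*(j'+1)*r \<le> 2*j*r" using r by (intro mult_right_mono) auto
      then have "{2*j'*r+1..<2*j'*r+1+r} \<subseteq> {1..2*j*r - r}" by (auto simp: algebra_simps)
      then show "H (2*j'*r+1) \<in> sets (N {1..2*j*r - r})" unfolding sets_N by (rule Hg)
    qed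
    finally show ?thesis by (simp add: sets_N)
  qed
  have QM: "Q j \<in> sets M" for j
  proof -
    have "Q j = space M - (\<Union>j'\<in>{..<j}. H (2*j'*r+1))"
      unfolding Q_def using sets.sets_into_space[OF HM] by auto
    also have "\<dots> \<in> sets M" using HM by (intro sets.Diff sets.top sets.finite_UN finite_lessThan)
    finally show ?thesis .
  qed
  have "measure M (Q j) \<le> (1 - \<rho>) ^ j + j * \<beta>" for j
  proof (induction j)
    case 0
    then show ?case unfolding Q_def using prob_le_1 by simp
  next
    case (Suc j)
    have cH: "measure M (space M - H (2*j*r+1)) \<le> 1 - \<rho>"
      using prob_compl[OF HM] Hp[of "2*j*r+1"] by simp
    show ?case
    proof (cases "j = 0")
      case True
      then have "Q (Suc j) = space M - H (2*j*r+1)" unfolding Q_def by auto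
      then show ?thesis using cH True \<beta> by simp
    next
      case False
      define l where "l = 2*j*r - r"
      have "2*1*r \<le> 2*j*r" using False by (intro mult_right_mono) auto
      then have l1: "1 \<le> l" unfolding l_def using r by linarith
      have "l + r = 2*j*r" unfolding l_def using False r by (cases j) auto
      then have sub: "{2*j*r+1..<2*j*r+1+r} \<subseteq> {l+r..}" by auto
      have A: "Q j \<in> gen_sigma M X {1..l}" unfolding l_def using Qg False by simp
      have B: "space M - H (2*j*r+1) \<in> gen_sigma M X {l+r..}"
      proof -
        have "H (2*j*r+1) \<in> sets (N {l+r..})" unfolding sets_N by (rule Hg[OF sub])
        then have "space (N {l+r..}) - H (2*j*r+1) \<in> sets (N {l+r..})" by (intro sets.Diff sets.top)
        then show ?thesis by (simp add: sets_N space_N)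
      qed
      have "measure M (Q (Suc j)) \<le> measure M (Q j) * measure M (space M - H (2*j*r+1)) + \<beta>"
        unfolding Qs \<beta>_def by (rule alpha_ineq[OF l1 A B])
      also have "\<dots> \<le> ((1 - \<rho>) ^ j + j * \<beta>) * (1 - \<rho>) + \<beta>"
        by (intro add_mono mult_mono Suc.IH cH order_refl) (use \<rho> \<beta> in auto)
      also have "\<dots> \<le> (1 - \<rho>) ^ Suc j + Suc j * \<beta>"
      proof -
        have "j * \<beta> * (1 - \<rho>) \<le> j * \<beta>" using \<rho> \<beta> by (simp add: mult_left_le)
        then show ?thesis by (simp add: algebra_simps)
      qed
      finally show ?thesis .
    qed
  qed
  moreover have "{\<omega>\<in>space M. \<forall>j<m. \<not> blk_dist r (\<lambda>i. X (2*j*r+1+i) \<omega>) c \<le> d} = Q m"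
    unfolding Q_def H_def by auto
  ultimately show ?thesis unfolding \<rho>_def \<beta>_def by simp
qed

end


context sp2 begin

lemma H_sets: "{\<omega>\<in>space M. blk_dist r (\<lambda>i. X (s+i) \<omega>) c \<le> d} \<in> sets M"
  using hit_gen[of s r "{s..<s+r}" c d] gen_sigma_sub by auto

lemma B_sets: "{\<omega>\<in>space M. \<forall>j<m. \<not> blk_dist r (\<lambda>i. X (2*j*r+1+i) \<omega>) c \<le> d} \<in> sets M"
proof -
  have "{\<omega>\<in>space M. \<forall>j<m. \<not> blk_dist r (\<lambda>i. X (2*j*r+1+i) \<omega>) c \<le> d}
     = space M - (\<Union>j\<in>{..<m}. {\<omega>\<in>space M. blk_dist r (\<lambda>i. X ((2*j*r+1)+i) \<omega>) c \<le> d})"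
    by auto
  also have "\<dots> \<in> sets M" by (intro sets.Diff sets.top sets.finite_UN finite_lessThan H_sets)
  finally show ?thesis .
qed

lemma exp_bound:
  assumes "0 \<le> \<rho>" "\<rho> \<le> 1"
  shows "(1 - \<rho>) ^ m \<le> exp (- real m * \<rho>)"
proof -
  have "(1 - \<rho>) ^ m \<le> exp (- \<rho>) ^ m"
    using assms by (intro power_mono) (auto simp: exp_ge_add_one_self[of "-\<rho>", simplified])
  also have "\<dots> = exp (- real m * \<rho>)" by (simp add: exp_of_nat_mult[symmetric])
  finally show ?thesis .
qed

lemma main_bound:
  assumes e: "\<epsilon> > 0" and k: "1 \<le> k" and r: "1 \<le> r" and n: "k * r \<le> n"
  shows "measure M {\<omega>\<in>space M. hausdorff_dist (sample X n \<omega>) MM > \<epsilon>}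
      \<le> (real k ^ 2 * beta_mix M X r + real k * exp (- real (k div 2) * rho M X r (\<epsilon> / 2)))
          / (real k * rho M X r (\<epsilon> / 4))"
proof -
  have "1 \<le> k * r" using k r by simp
  then have n1: "1 \<le> n" using n by linarith
  obtain S where S: "finite S" "S \<subseteq> blk_support M X r" "real (card S) * rho M X r (\<epsilon>/4) \<le> 1"
    "\<forall>x\<in>blk_support M X r. \<exists>c\<in>S. blk_dist r x c \<le> \<epsilon>/2"
    using packing_exists[OF r, of "\<epsilon>/4"] e by auto
  define m where "m = k div 2"
  define B where "B = (\<lambda>c. {\<omega>\<in>space M. \<forall>j<m. \<not> blk_dist r (\<lambda>i. X (2*j*r+1+i) \<omega>) c \<le> \<epsilon>/2})"
  define Ns where "Ns = {\<omega>\<in>space M. \<not> (\<forall>i\<in>{1..n}. X i \<omega> \<in> MM)}"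
  define Bad where "Bad = {\<omega>\<in>space M. hausdorff_dist (sample X n \<omega>) MM > \<epsilon>}"
  have BM: "B c \<in> sets M" for c unfolding B_def by (rule B_sets)
  have Xset: "{\<omega>\<in>space M. X i \<omega> \<in> C} \<in> sets M" if C: "closed C" for C i
  proof -
    have "X i -` C \<inter> space M \<in> sets M" by (rule measurable_sets[OF Xm borel_closed[OF C]])
    moreover have "X i -` C \<inter> space M = {\<omega>\<in>space M. X i \<omega> \<in> C}" by auto
    ultimately show ?thesis by simp
  qed
  have NsM: "Ns \<in> sets M" unfolding Ns_def
    by (intro sets.sets_Collect_neg sets.sets_Collect_finite_All Xset MM_closed finite_atLeastAtMost)
  have "AE \<omega> in M. \<forall>i\<in>{1..n}. X i \<omega> \<in> MM"
    by (rule AE_ball_countable') (auto intro: AE_X_MM)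
  then have "emeasure M Ns = 0"
    by (subst (asm) AE_iff_measurable[OF NsM]) (auto simp: Ns_def)
  then have Ns0: "measure M Ns = 0" by (simp add: measure_def)
  have BadM: "Bad \<in> sets M"
  proof -
    have "Bad = space M - {\<omega>\<in>space M. hausdorff_dist (sample X n \<omega>) MM \<le> \<epsilon>}"
      unfolding Bad_def by auto
    then show ?thesis using good_meas[OF n1, of \<epsilon>] by auto
  qed
  have cover: "Bad \<subseteq> Ns \<union> (\<Union>c\<in>S. B c)"
  proof
    fix \<omega> assume \<omega>: "\<omega> \<in> Bad"
    show "\<omega> \<in> Ns \<union> (\<Union>c\<in>S. B c)"
    proof (rule ccontr)
      assume "\<not> ?thesis"
      then have inM: "\<forall>i\<in>{1..n}. X i \<omega> \<in> MM" and nB: "\<forall>c\<in>S. \<omega> \<notin> B c"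
        and sp: "\<omega> \<in> space M" using \<omega> unfolding Ns_def Bad_def by auto
      have Sfin: "finite (sample X n \<omega>)" "sample X n \<omega> \<noteq> {}" using n1 unfolding sample_def by auto
      have part1: "\<forall>a\<in>sample X n \<omega>. infdist a MM \<le> \<epsilon>"
        using inM e unfolding sample_def by auto
      have part2: "infdist b (sample X n \<omega>) \<le> \<epsilon>" if b: "b \<in> MM" for b
      proof (rule field_le_epsilon)
        fix \<eta> :: real assume \<eta>: "\<eta> > 0"
        have bs: "b \<in> rv_support M (X 1)" using b MM by simp
        have "\<exists>\<omega>'\<in>space M. blk_vec X r \<omega>' \<in> blk_support M X r \<and> dist (X 1 \<omega>') b < \<eta>"
        proof (rule ccontr)
          assume nex: "\<not> ?thesis"
          have "AE \<omega>' in M. blk_vec X r \<omega>' \<in> blk_support M X r \<longrightarrow> dist (X 1 \<omega>') b \<ge> \<eta>"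
            by (rule AE_I2) (use nex in \<open>auto simp: not_less\<close>)
          then have "AE \<omega>' in M. dist (X 1 \<omega>') b \<ge> \<eta>"
            using AE_blk_support[OF r] by eventually_elim auto
          then show False using rv_support_pos[OF bs \<eta>] by simp
        qed
        then obtain \<omega>' where \<omega>': "\<omega>' \<in> space M" "blk_vec X r \<omega>' \<in> blk_support M X r"
          "dist (X 1 \<omega>') b < \<eta>" by blast
        then obtain c where c: "c \<in> S" "blk_dist r (blk_vec X r \<omega>') c \<le> \<epsilon>/2" using S(4) by blast
        have x0: "blk_vec X r \<omega>' 0 = X 1 \<omega>'" using r by (simp add: blk_vec_def)
        have d1: "norm (X 1 \<omega>' - c 0) \<le> \<epsilon>/2"
          using blk_dist_comp[of 0 r "blk_vec X r \<omega>'" c] r c(2) x0 by simp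
        from nB c(1) obtain j where j: "j < m" "blk_dist r (\<lambda>i. X (2*j*r+1+i) \<omega>) c \<le> \<epsilon>/2"
          unfolding B_def using sp by auto
        have d2: "norm (X (2*j*r+1) \<omega> - c 0) \<le> \<epsilon>/2"
          using blk_dist_comp[of 0 r "\<lambda>i. X (2*j*r+1+i) \<omega>" c] r j(2) by simp
        have "2*j + 2 \<le> k" using j(1) unfolding m_def by linarith
        then have "(2*j+2)*r \<le> k*r" by (rule mult_right_mono) simp
        then have sn: "2*j*r+1 \<in> {1..n}" using n r by (auto simp: algebra_simps)
        have "infdist b (sample X n \<omega>) \<le> dist b (X (2*j*r+1) \<omega>)"
          by (rule infdist_le) (use sn in \<open>auto simp: sample_def\<close>)
        also have "\<dots> \<le> dist b (X 1 \<omega>') + dist (X 1 \<omega>') (c 0) + dist (c 0) (X (2*j*r+1) \<omega>)"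
          using dist_triangle[of b "X (2*j*r+1) \<omega>" "X 1 \<omega>'"]
            dist_triangle[of "X 1 \<omega>'" "X (2*j*r+1) \<omega>" "c 0"] by linarith
        also have "\<dots> \<le> \<eta> + \<epsilon>/2 + \<epsilon>/2"
          using \<omega>'(3) d1 d2 by (simp add: dist_norm norm_minus_commute dist_commute)
        finally show "infdist b (sample X n \<omega>) \<le> \<epsilon> + \<eta>" by simp
      qed
      have "hausdorff_dist (sample X n \<omega>) MM \<le> \<epsilon>"
        unfolding hd_char[OF Sfin cpt MM_nonempty] using part1 part2 by auto
      then show False using \<omega> unfolding Bad_def by auto
    qed
  qed
  define \<rho>2 where "\<rho>2 = rho M X r (\<epsilon>/2)"
  define \<rho>4 where "\<rho>4 = rho M X r (\<epsilon>/4)"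
  define \<beta> where "\<beta> = beta_mix M X r"
  have \<rho>2: "0 \<le> \<rho>2" "\<rho>2 \<le> 1" unfolding \<rho>2_def using rho_nonneg[OF r] rho_le1[OF r] by auto
  have \<rho>4: "0 < \<rho>4" unfolding \<rho>4_def using rho_pos[OF r] e by simp
  have \<beta>: "0 \<le> \<beta>" unfolding \<beta>_def by (rule beta_mix_nonneg)
  define E where "E = exp (- real m * \<rho>2)"
  have "measure M Bad \<le> measure M (Ns \<union> (\<Union>c\<in>S. B c))"
    by (rule finite_measure_mono[OF cover]) (use NsM BM S(1) in auto)
  also have "\<dots> \<le> measure M Ns + measure M (\<Union>c\<in>S. B c)"
    by (rule measure_Un_le) (use NsM BM S(1) in auto)
  also have "\<dots> \<le> 0 + (\<Sum>c\<in>S. measure M (B c))"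
    using Ns0 measure_UNION_le[OF S(1), of B M] BM by simp
  also have "\<dots> = (\<Sum>c\<in>S. measure M (B c))" by simp
  also have "\<dots> \<le> (\<Sum>c\<in>S. E + real k * \<beta>)"
  proof (rule sum_mono)
    fix c assume c: "c \<in> S"
    have "measure M (B c) \<le> (1 - \<rho>2) ^ m + m * \<beta>"
      unfolding B_def \<rho>2_def \<beta>_def by (rule miss_bound[OF r]) (use c S(2) in auto)
    also have "\<dots> \<le> E + real k * \<beta>"
    proof (intro add_mono)
      show "(1 - \<rho>2) ^ m \<le> E" unfolding E_def by (rule exp_bound[OF \<rho>2])
      have "real m \<le> real k" unfolding m_def by simp
      then show "real m * \<beta> \<le> real k * \<beta>" using \<beta> by (rule mult_right_mono)
    qed
    finally show "measure M (B c) \<le> E + real k * \<beta>" .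
  qed
  also have "\<dots> = real (card S) * (E + real k * \<beta>)" by simp
  also have "\<dots> \<le> (1 / \<rho>4) * (E + real k * \<beta>)"
  proof (rule mult_right_mono)
    show "real (card S) \<le> 1 / \<rho>4" using S(3) \<rho>4 unfolding \<rho>4_def by (simp add: field_simps)
    show "0 \<le> E + real k * \<beta>" unfolding E_def using \<beta> by simp
  qed
  also have "\<dots> = (real k ^ 2 * \<beta> + real k * E) / (real k * \<rho>4)"
    using k \<rho>4 by (simp add: field_simps power2_eq_square)
  finally show ?thesis unfolding Bad_def \<rho>4_def \<beta>_def E_def \<rho>2_def m_def by simp
qed

end


lemma arith_bound:
  fixes m :: nat and b C \<alpha> \<beta> \<rho>2 \<rho>4 :: real
  assumes m: "1 \<le> m" and b: "b > 1" and C4: "C \<ge> 4" and Ca: "C \<ge> 3 / \<alpha>" and \<alpha>: "\<alpha> > 0"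
    and h4: "\<rho>4 * exp (real m powr b) / real m powr (1 + b) \<ge> C"
    and h2: "\<rho>2 * exp (real m powr b) / real m powr (1 + b) \<ge> C"
    and hb: "exp (2 * real m powr b) / (real m)\<^sup>2 * \<beta> \<le> 1" and \<beta>: "\<beta> \<ge> 0"
  shows "(real (nat \<lceil>exp (real m powr b)\<rceil>) ^ 2 * \<beta> + real (nat \<lceil>exp (real m powr b)\<rceil>)
      * exp (- real (nat \<lceil>exp (real m powr b)\<rceil> div 2) * \<rho>2))
      / (real (nat \<lceil>exp (real m powr b)\<rceil>) * \<rho>4) \<le> \<alpha>"
proof -
  define E where "E = exp (real m powr b)"
  define P where "P = real m powr (1 + b)"
  define k where "k = nat \<lceil>E\<rceil>"
  have mb: "real m powr b \<ge> 1" using m b by (intro ge_one_powr_ge_zero) auto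
  have E2: "E \<ge> 2"
  proof -
    have "exp (1::real) \<ge> 1 + 1" by (rule exp_ge_add_one_self)
    moreover have "exp 1 \<le> E" unfolding E_def using mb by simp
    ultimately show ?thesis by simp
  qed
  have P1: "P \<ge> real m powr b" unfolding P_def using m b by (intro powr_mono) auto
  have Pm: "P \<ge> (real m)\<^sup>2"
  proof -
    have "real m powr 2 \<le> P" unfolding P_def using m b by (intro powr_mono) auto
    then show ?thesis using m by (simp add: powr_realpow)
  qed
  have Ppos: "P > 0" using P1 mb by linarith
  have C0: "C > 0" using C4 by simp
  have r4: "\<rho>4 * E \<ge> C * P" using h4 Ppos unfolding E_def P_def by (simp add: field_simps)
  have r2: "\<rho>2 * E \<ge> C * P" using h2 Ppos unfolding E_def P_def by (simp add: field_simps)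
  have Epos: "E > 0" using E2 by simp
  have \<rho>4: "\<rho>4 > 0"
  proof -
    have "\<rho>4 * E > 0" using r4 C0 Ppos by (smt (verit) mult_pos_pos)
    then show ?thesis using Epos by (simp add: zero_less_mult_iff)
  qed
  have kk: "real k = real_of_int \<lceil>E\<rceil>" unfolding k_def using Epos by simp
  have kE: "real k \<ge> E" "real k \<le> E + 1" unfolding kk by linarith+
  have k1: "real k > 0" using kE Epos by linarith
  have EEb: "E * E * \<beta> \<le> P"
  proof -
    have "E * E = exp (2 * real m powr b)" unfolding E_def by (simp add: exp_add[symmetric])
    then have "E * E * \<beta> \<le> (real m)\<^sup>2" using hb m by (simp add: field_simps)
    then show ?thesis using Pm by linarith
  qed
  have t1: "real k * \<beta> \<le> (2 / C) * \<rho>4"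
  proof -
    have "real k * \<beta> \<le> 2 * E * \<beta>" using kE E2 \<beta> by (intro mult_right_mono) auto
    also have "\<dots> \<le> 2 * P / E" using EEb Epos by (simp add: field_simps)
    also have "\<dots> \<le> (2 / C) * \<rho>4" using r4 Epos C0 by (simp add: field_simps)
    finally show ?thesis .
  qed
  define e2 where "e2 = exp (- real (k div 2) * \<rho>2)"
  have kd: "real (k div 2) \<ge> E / 4"
  proof -
    have "k \<le> 2 * (k div 2) + 1" by presburger
    then have "real k \<le> real (2 * (k div 2) + 1)" by (simp only: of_nat_le_iff)
    then have "real (k div 2) \<ge> (real k - 1) / 2" by simp
    then show ?thesis using kE E2 by linarith
  qed
  have \<rho>2: "\<rho>2 \<ge> 0"
  proof -
    have "\<rho>2 * E > 0" using r2 C0 Ppos by (smt (verit) mult_pos_pos)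
    then show ?thesis using Epos by (simp add: zero_less_mult_iff)
  qed
  have kr: "real (k div 2) * \<rho>2 \<ge> P"
  proof -
    have "real (k div 2) * \<rho>2 \<ge> (E / 4) * \<rho>2" using kd \<rho>2 by (intro mult_right_mono) auto
    moreover have "(E / 4) * \<rho>2 \<ge> P"
    proof -
      have "4 * P \<le> C * P" using C4 Ppos by (intro mult_right_mono) auto
      then have "4 * P \<le> \<rho>2 * E" using r2 by linarith
      moreover have "(E / 4) * \<rho>2 = (\<rho>2 * E) / 4" by simp
      ultimately show ?thesis by linarith
    qed
    ultimately show ?thesis by linarith
  qed
  have t2: "e2 \<le> (1 / C) * \<rho>4"
  proof -
    have "e2 * E \<le> exp (- P) * E" unfolding e2_def using kr Epos by simp
    also have "\<dots> = exp (real m powr b - P)" unfolding E_def by (simp add: exp_diff exp_minus field_simps)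
    also have "\<dots> \<le> 1" using P1 by simp
    also have "\<dots> \<le> P" using P1 mb by linarith
    finally have "e2 * E \<le> P" .
    then have "e2 \<le> P / E" using Epos by (simp add: field_simps)
    also have "\<dots> \<le> (1 / C) * \<rho>4" using r4 Epos C0 by (simp add: field_simps)
    finally show ?thesis .
  qed
  have "(real k ^ 2 * \<beta> + real k * e2) / (real k * \<rho>4) = (real k * \<beta> + e2) / \<rho>4"
    using k1 \<rho>4 by (simp add: field_simps power2_eq_square)
  also have "\<dots> \<le> ((2 / C) * \<rho>4 + (1 / C) * \<rho>4) / \<rho>4"
    using t1 t2 \<rho>4 by (intro divide_right_mono) auto
  also have "\<dots> = 3 / C" using \<rho>4 by (simp add: field_simps)
  also have "\<dots> \<le> \<alpha>" using Ca \<alpha> C0 by (simp add: field_simps)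
  finally show ?thesis unfolding k_def e2_def E_def .
qed


context sp2 begin

lemma part2:
  assumes ex: "\<exists>b>1. \<exists>\<epsilon>0>0. \<forall>\<epsilon>. 0 < \<epsilon> \<and> \<epsilon> < \<epsilon>0 \<longrightarrow>
              filterlim (\<lambda>m::nat. rho M X m \<epsilon> * exp (real m powr b) / real m powr (1 + b))
                at_top sequentially
            \<and> (\<lambda>m::nat. exp (2 * real m powr b) / (real m)\<^sup>2 * beta_mix M X m) \<longlonglongrightarrow> 0"
  shows "asympt_dense M X MM"
proof -
  obtain b \<epsilon>0 where b: "b > 1" and e0: "\<epsilon>0 > 0" and hyp: "\<forall>\<epsilon>. 0 < \<epsilon> \<and> \<epsilon> < \<epsilon>0 \<longrightarrow>
              filterlim (\<lambda>m::nat. rho M X m \<epsilon> * exp (real m powr b) / real m powr (1 + b))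
                at_top sequentially
            \<and> (\<lambda>m::nat. exp (2 * real m powr b) / (real m)\<^sup>2 * beta_mix M X m) \<longlonglongrightarrow> 0"
    using ex by blast
  show ?thesis unfolding asympt_dense_def
  proof (intro exI[of _ \<epsilon>0] conjI allI impI)
    show "\<epsilon>0 > 0" by (rule e0)
    fix \<epsilon> \<alpha> :: real assume \<epsilon>: "0 < \<epsilon> \<and> \<epsilon> < \<epsilon>0" and \<alpha>: "0 < \<alpha> \<and> \<alpha> < 1"
    have h4: "filterlim (\<lambda>m::nat. rho M X m (\<epsilon>/4) * exp (real m powr b) / real m powr (1 + b)) at_top sequentially"
      and hb: "(\<lambda>m::nat. exp (2 * real m powr b) / (real m)\<^sup>2 * beta_mix M X m) \<longlonglongrightarrow> 0"
      using hyp[rule_format, of "\<epsilon>/4"] \<epsilon> by auto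
    have h2: "filterlim (\<lambda>m::nat. rho M X m (\<epsilon>/2) * exp (real m powr b) / real m powr (1 + b)) at_top sequentially"
      using hyp[rule_format, of "\<epsilon>/2"] \<epsilon> by auto
    define C where "C = max 4 (3 / \<alpha>)"
    have e1: "eventually (\<lambda>m::nat. C \<le> rho M X m (\<epsilon>/4) * exp (real m powr b) / real m powr (1 + b)) sequentially"
      using h4 by (simp add: filterlim_at_top)
    have e2: "eventually (\<lambda>m::nat. C \<le> rho M X m (\<epsilon>/2) * exp (real m powr b) / real m powr (1 + b)) sequentially"
      using h2 by (simp add: filterlim_at_top)
    have e3: "eventually (\<lambda>m::nat. exp (2 * real m powr b) / (real m)\<^sup>2 * beta_mix M X m < 1) sequentially"
      by (rule order_tendstoD(2)[OF hb zero_less_one])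
    have ev: "eventually (\<lambda>m::nat. C \<le> rho M X m (\<epsilon>/4) * exp (real m powr b) / real m powr (1 + b)
        \<and> C \<le> rho M X m (\<epsilon>/2) * exp (real m powr b) / real m powr (1 + b)
        \<and> exp (2 * real m powr b) / (real m)\<^sup>2 * beta_mix M X m < 1 \<and> 1 \<le> m) sequentially"
      by (intro eventually_conj e1 e2 e3 eventually_ge_at_top)
    then obtain m :: nat where mm: "C \<le> rho M X m (\<epsilon>/4) * exp (real m powr b) / real m powr (1 + b)"
        "C \<le> rho M X m (\<epsilon>/2) * exp (real m powr b) / real m powr (1 + b)"
        "exp (2 * real m powr b) / (real m)\<^sup>2 * beta_mix M X m < 1" "1 \<le> m"
      unfolding eventually_sequentially by blast
    define k where "k = nat \<lceil>exp (real m powr b)\<rceil>"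
    have k1: "1 \<le> k" unfolding k_def
    proof -
      have "exp (real m powr b) > 0" by simp
      then have "\<lceil>exp (real m powr b)\<rceil> \<ge> 1" by (simp add: ceiling_le_iff[symmetric] one_le_ceiling)
      then show "1 \<le> nat \<lceil>exp (real m powr b)\<rceil>" by linarith
    qed
    have bnd: "(real k ^ 2 * beta_mix M X m + real k * exp (- real (k div 2) * rho M X m (\<epsilon> / 2)))
          / (real k * rho M X m (\<epsilon> / 4)) \<le> \<alpha>"
    proof -
      have C4: "4 \<le> C" and Ca: "3 / \<alpha> \<le> C" unfolding C_def by auto
      have a0: "\<alpha> > 0" using \<alpha> by simp
      have hb': "exp (2 * real m powr b) / (real m)\<^sup>2 * beta_mix M X m \<le> 1" using mm(3) by simp
      show ?thesis unfolding k_def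
        by (rule arith_bound[OF mm(4) b C4 Ca a0 mm(1) mm(2) hb' beta_mix_nonneg])
    qed
    show "\<exists>n0. \<forall>n\<ge>n0. 1 - \<alpha> \<le> measure M {\<omega>\<in>space M. hausdorff_dist (sample X n \<omega>) MM \<le> \<epsilon>}"
    proof (intro exI[of _ "k * m"] allI impI)
      fix n assume n: "k * m \<le> n"
      have "1 \<le> k * m" using k1 mm(4) by simp
      then have n1: "1 \<le> n" using n by linarith
      have G: "{\<omega>\<in>space M. hausdorff_dist (sample X n \<omega>) MM \<le> \<epsilon>} \<in> sets M" by (rule good_meas[OF n1])
      have "measure M {\<omega>\<in>space M. hausdorff_dist (sample X n \<omega>) MM > \<epsilon>} \<le> \<alpha>"
        using main_bound[of \<epsilon> k m n] \<epsilon> k1 mm(4) n bnd by linarith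
      moreover have "{\<omega>\<in>space M. hausdorff_dist (sample X n \<omega>) MM > \<epsilon>}
          = space M - {\<omega>\<in>space M. hausdorff_dist (sample X n \<omega>) MM \<le> \<epsilon>}" by auto
      ultimately show "1 - \<alpha> \<le> measure M {\<omega>\<in>space M. hausdorff_dist (sample X n \<omega>) MM \<le> \<epsilon>}"
        using prob_compl[OF G] by simp
    qed
  qed
qed

end

theorem proposition4p3:
  fixes M :: "'a measure" and X :: "nat \<Rightarrow> 'a \<Rightarrow> 'b::euclidean_space" and \<MM> :: "'b set"
  assumes "prob_space M"
    and "\<And>i. X i \<in> borel_measurable M"
    and "stationary M X"
    and "(\<lambda>n. beta_mix M X n) \<longlonglongrightarrow> 0"
    and "\<MM> = rv_support M (X 1)"
    and "compact \<MM>"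
  shows "(\<forall>\<epsilon>>0. \<forall>n k r::nat. k \<ge> 1 \<and> r \<ge> 1 \<and> k * r \<le> n \<longrightarrow>
            measure M {\<omega>\<in>space M. hausdorff_dist (sample X n \<omega>) \<MM> > \<epsilon>}
              \<le> (real k ^ 2 * beta_mix M X r
                  + real k * exp (- real (k div 2) * rho M X r (\<epsilon> / 2)))
                / (real k * rho M X r (\<epsilon> / 4)))
       \<and> ((\<exists>b>1. \<exists>\<epsilon>0>0. \<forall>\<epsilon>. 0 < \<epsilon> \<and> \<epsilon> < \<epsilon>0 \<longrightarrow>
              filterlim (\<lambda>m::nat. rho M X m \<epsilon> * exp (real m powr b) / real m powr (1 + b))
                at_top sequentially
            \<and> (\<lambda>m::nat. exp (2 * real m powr b) / (real m)\<^sup>2 * beta_mix M X m) \<longlonglongrightarrow> 0)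
          \<longrightarrow> asympt_dense M X \<MM>)"
proof -
  have "sp2 M X \<MM>"
    unfolding sp2_def sp2_axioms_def sp_def sp_axioms_def using assms(1,2,3,5,6) by blast
  then interpret sp2 M X \<MM> .
  show ?thesis
  proof (intro conjI allI impI)
    fix \<epsilon> :: real and n k r :: nat
    assume "\<epsilon> > 0" "k \<ge> 1 \<and> r \<ge> 1 \<and> k * r \<le> n"
    then show "measure M {\<omega>\<in>space M. hausdorff_dist (sample X n \<omega>) \<MM> > \<epsilon>}
              \<le> (real k ^ 2 * beta_mix M X r
                  + real k * exp (- real (k div 2) * rho M X r (\<epsilon> / 2)))
                / (real k * rho M X r (\<epsilon> / 4))"
      using main_bound[of \<epsilon> k r n] by blast
  next
    assume "\<exists>b>1. \<exists>\<epsilon>0>0. \<forall>\<epsilon>. 0 < \<epsilon> \<and> \<epsilon> < \<epsilon>0 \<longrightarrow>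
              filterlim (\<lambda>m::nat. rho M X m \<epsilon> * exp (real m powr b) / real m powr (1 + b))
                at_top sequentially
            \<and> (\<lambda>m::nat. exp (2 * real m powr b) / (real m)\<^sup>2 * beta_mix M X m) \<longlonglongrightarrow> 0"
    then show "asympt_dense M X \<MM>" by (rule part2)
  qed
qed


end
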